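(* Let $I\subseteq\mathbb{R}$ be an interval, let $h:J\to\mathbb{R}$ be a positive function on an interval $J\supseteq(0,1)$, let $f\in SX(h,I)$, let $a,b\in I$ with $a<b$, and let $f\in L_{1}[a,b]$. Then for every $\alpha>0$, $$\frac{1}{\alpha h\left(\frac{1}{2}\right)}f\left(\frac{a+b}{2}\right)\leq\frac{\Gamma(\alpha)}{(b-a)^{\alpha}}\left[J_{a^{+}}^{\alpha}f(b)+J_{b^{-}}^{\alpha}f(a)\right]\leq\left[f(a)+f(b)\right]\int_{0}^{1}t^{\alpha-1}\left[h(t)+h(1-t)\right]dt.$$
   Context: Given a positive function $h:J\to\mathbb{R}$, a function $f:I\to\mathbb{R}$ belongs to the class $SX(h,I)$ ($h$-convex functions) if $f$ is nonnegative and $f(\lambda x+(1-\lambda)y)\leq h(\lambda)f(x)+h(1-\lambda)f(y)$ for all $x,y\in I$ and $\lambda\in(0,1)$. For $f\in L_1[a,b]$ and $\alpha>0$, the Riemann–Liouville fractional integrals are $J_{a^{+}}^{\alpha}f(x)=\frac{1}{\Gamma(\alpha)}\int_a^x (x-t)^{\alpha-1}f(t)\,dt$ for $x>a$ and $J_{b^{-}}^{\alpha}f(x)=\frac{1}{\Gamma(\alpha)}\int_x^b (t-x)^{\alpha-1}f(t)\,dt$ for $x<b$, where $\Gamma(\alpha)=\int_0^\infty e^{-u}u^{\alpha-1}\,du$. *)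

theory Defs
  imports "HOL-Analysis.Analysis"
begin

definition hconvex :: "(real \<Rightarrow> real) \<Rightarrow> real set \<Rightarrow> (real \<Rightarrow> real) \<Rightarrow> bool" where
  "hconvex h I f \<longleftrightarrow> (\<forall>x\<in>I. 0 \<le> f x) \<and>
     (\<forall>x\<in>I. \<forall>y\<in>I. \<forall>l\<in>{0<..<1}. f (l * x + (1 - l) * y) \<le> h l * f x + h (1 - l) * f y)"

text \<open>Riemann-Liouville fractional integrals, taken in the extended nonnegative reals
  (the functions they are applied to here are nonnegative, so this is the usual
  integral, with value infinity allowed when it diverges).\<close>
definition RL_left :: "real \<Rightarrow> real \<Rightarrow> (real \<Rightarrow> real) \<Rightarrow> real \<Rightarrow> ennreal" where
  "RL_left \<alpha> a f x = ennreal (1 / Gamma \<alpha>) *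
     (\<integral>\<^sup>+ t\<in>{a<..<x}. ennreal ((x - t) powr (\<alpha> - 1) * f t) \<partial>lborel)"

definition RL_right :: "real \<Rightarrow> real \<Rightarrow> (real \<Rightarrow> real) \<Rightarrow> real \<Rightarrow> ennreal" where
  "RL_right \<alpha> b f x = ennreal (1 / Gamma \<alpha>) *
     (\<integral>\<^sup>+ t\<in>{x<..<b}. ennreal ((t - x) powr (\<alpha> - 1) * f t) \<partial>lborel)"

end

theory Submission
  imports Defs
begin

lemma nn_cmult_le:
  fixes r :: real assumes "0 \<le> r"
  shows "(\<integral>\<^sup>+x. ennreal r * g x \<partial>M) \<le> ennreal r * integral\<^sup>N M g"
proof (cases "r = 0")
  case True then show ?thesis by simp
next
  case False
  with assms have r: "r > 0" by simp
  show ?thesis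
    unfolding nn_integral_def[of M "\<lambda>x. ennreal r * g x"]
  proof (rule SUP_least, clarify)
    fix \<phi> assume s: "simple_function M \<phi>" and le: "\<phi> \<le> (\<lambda>x. ennreal r * g x)"
    define \<psi> where "\<psi> = (\<lambda>x. ennreal (1/r) * \<phi> x)"
    have s\<psi>: "simple_function M \<psi>" unfolding \<psi>_def using s by (intro simple_function_mult) auto
    have "\<psi> \<le> g"
    proof (rule le_funI)
      fix x
      have "\<psi> x \<le> ennreal (1/r) * (ennreal r * g x)"
        unfolding \<psi>_def using le by (intro mult_left_mono) (auto simp: le_fun_def)
      also have "\<dots> = (ennreal (1/r) * ennreal r) * g x" by (simp add: mult.assoc)
      also have "ennreal (1/r) * ennreal r = 1" using r by (simp flip: ennreal_mult)
      finally have "\<psi> x \<le> 1 * g x" .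
      thus "\<psi> x \<le> g x" by simp
    qed
    hence "integral\<^sup>S M \<psi> \<le> integral\<^sup>N M g"
      unfolding nn_integral_def using s\<psi> by (intro SUP_upper) auto
    moreover have "integral\<^sup>S M \<phi> = ennreal r * integral\<^sup>S M \<psi>"
    proof -
      have "ennreal r * ennreal (1/r) = 1" using r by (simp flip: ennreal_mult)
      hence "\<phi> = (\<lambda>x. ennreal r * \<psi> x)" unfolding \<psi>_def
        by (auto simp: fun_eq_iff mult.assoc[symmetric])
      then show ?thesis using s\<psi> by simp
    qed
    ultimately show "integral\<^sup>S M \<phi> \<le> ennreal r * integral\<^sup>N M g"
      by (simp add: mult_left_mono)
  qed
qed

lemma powr_int01:
  assumes "0 < \<alpha>"
  shows "(\<integral>\<^sup>+s. ennreal (s powr (\<alpha> - 1)) * indicator {0<..<1} s \<partial>lborel) = ennreal (1/\<alpha>)"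
proof -
  have "((\<lambda>x. x powr (\<alpha> - 1)) has_integral (1 powr (\<alpha> - 1 + 1) / (\<alpha> - 1 + 1))) {0..1}"
    using assms by (intro has_integral_powr_from_0) auto
  hence "((\<lambda>x. x powr (\<alpha> - 1)) has_integral (1/\<alpha>)) {0<..<1}"
    by (simp add: has_integral_Icc_iff_Ioo)
  thus ?thesis by (intro nn_integral_has_integral_lebesgue') auto
qed

lemma affL:
  fixes F :: "real \<Rightarrow> real"
  assumes [measurable]: "F \<in> borel_measurable borel" and ab: "a < b" and "0 < \<alpha>"
  shows "(\<integral>\<^sup>+t. ennreal ((b - t) powr (\<alpha> - 1) * F t) * indicator {a<..<b} t \<partial>lborel)
    = ennreal ((b - a) powr \<alpha>) * (\<integral>\<^sup>+s. ennreal (s powr (\<alpha> - 1) * F (b - (b - a) * s)) * indicator {0<..<1} s \<partial>lborel)"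
proof -
  have "(\<integral>\<^sup>+t. ennreal ((b - t) powr (\<alpha> - 1) * F t) * indicator {a<..<b} t \<partial>lborel)
     = ennreal \<bar>- (b - a)\<bar> * (\<integral>\<^sup>+s. ennreal ((b - (b + - (b - a) * s)) powr (\<alpha> - 1) * F (b + - (b - a) * s)) * indicator {a<..<b} (b + - (b - a) * s) \<partial>lborel)"
    by (rule nn_integral_real_affine) (use ab in auto)
  also have "\<dots> = ennreal (b - a) * (\<integral>\<^sup>+s. ennreal ((b - a) powr (\<alpha> - 1)) * (ennreal (s powr (\<alpha> - 1) * F (b - (b - a) * s)) * indicator {0<..<1} s) \<partial>lborel)"
  proof -
    have "ennreal ((b - (b + - (b - a) * s)) powr (\<alpha> - 1) * F (b + - (b - a) * s)) * indicator {a<..<b} (b + - (b - a) * s)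
       = ennreal ((b - a) powr (\<alpha> - 1)) * (ennreal (s powr (\<alpha> - 1) * F (b - (b - a) * s)) * indicator {0<..<1} s)" for s
    proof (cases "s \<in> {0<..<1}")
      case True
      have i: "b + - (b - a) * s \<in> {a<..<b}" using True ab
      proof -
        have "(b - a) * s < (b - a) * 1" using True ab by (intro mult_strict_left_mono) auto
        moreover have "0 < (b - a) * s" using True ab by simp
        moreover have "(a - b) * s = - ((b - a) * s)" by algebra
        ultimately show ?thesis by simp
      qed
      have "(b - (b + - (b - a) * s)) powr (\<alpha> - 1) = (b - a) powr (\<alpha> - 1) * s powr (\<alpha> - 1)"
      proof -
        have "b - (b + - (b - a) * s) = (b - a) * s" by algebra
        thus ?thesis using True ab by (simp add: powr_mult)
      qed
      moreover have "b + - (b - a) * s = b - (b - a) * s" by algebra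
      ultimately show ?thesis using True i ab by (simp add: ennreal_mult' mult.assoc)
    next
      case False
      have i: "b + - (b - a) * s \<notin> {a<..<b}"
      proof (rule notI)
        assume m: "b + - (b - a) * s \<in> {a<..<b}"
        show False
        proof (cases "s \<le> 0")
          case True
          hence "(b - a) * s \<le> 0" using ab by (simp add: mult_nonneg_nonpos)
          moreover have "(a - b) * s = - ((b - a) * s)" by algebra
          ultimately show False using m by simp
        next
          case c: False
          hence "s \<ge> 1" using False by auto
          hence "(b - a) * 1 \<le> (b - a) * s" using ab by (intro mult_left_mono) auto
          moreover have "(a - b) * s = - ((b - a) * s)" by algebra
          ultimately show False using m by simp
        qed
      qed
      then show ?thesis using False by simp
    qed
    then show ?thesis using ab by simp
  qed
  also have "\<dots> = ennreal (b - a) * (ennreal ((b - a) powr (\<alpha> - 1)) * (\<integral>\<^sup>+s. ennreal (s powr (\<alpha> - 1) * F (b - (b - a) * s)) * indicator {0<..<1} s \<partial>lborel))"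
    by (subst nn_integral_cmult) auto
  also have "\<dots> = ennreal ((b - a) * (b - a) powr (\<alpha> - 1)) * (\<integral>\<^sup>+s. ennreal (s powr (\<alpha> - 1) * F (b - (b - a) * s)) * indicator {0<..<1} s \<partial>lborel)"
    using ab by (simp add: ennreal_mult mult.assoc)
  also have "(b - a) * (b - a) powr (\<alpha> - 1) = (b - a) powr \<alpha>"
    using ab by (simp add: powr_mult_base)
  finally show ?thesis .
qed


lemma affR:
  fixes F :: "real \<Rightarrow> real"
  assumes [measurable]: "F \<in> borel_measurable borel" and ab: "a < b" and "0 < \<alpha>"
  shows "(\<integral>\<^sup>+t. ennreal ((t - a) powr (\<alpha> - 1) * F t) * indicator {a<..<b} t \<partial>lborel)
    = ennreal ((b - a) powr \<alpha>) * (\<integral>\<^sup>+s. ennreal (s powr (\<alpha> - 1) * F (a + (b - a) * s)) * indicator {0<..<1} s \<partial>lborel)"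
proof -
  have "(\<integral>\<^sup>+t. ennreal ((t - a) powr (\<alpha> - 1) * F t) * indicator {a<..<b} t \<partial>lborel)
     = ennreal \<bar>b - a\<bar> * (\<integral>\<^sup>+s. ennreal ((a + (b - a) * s - a) powr (\<alpha> - 1) * F (a + (b - a) * s)) * indicator {a<..<b} (a + (b - a) * s) \<partial>lborel)"
    by (rule nn_integral_real_affine) (use ab in auto)
  also have "\<dots> = ennreal (b - a) * (\<integral>\<^sup>+s. ennreal ((b - a) powr (\<alpha> - 1)) * (ennreal (s powr (\<alpha> - 1) * F (a + (b - a) * s)) * indicator {0<..<1} s) \<partial>lborel)"
  proof -
    have "ennreal ((a + (b - a) * s - a) powr (\<alpha> - 1) * F (a + (b - a) * s)) * indicator {a<..<b} (a + (b - a) * s)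
       = ennreal ((b - a) powr (\<alpha> - 1)) * (ennreal (s powr (\<alpha> - 1) * F (a + (b - a) * s)) * indicator {0<..<1} s)" for s
    proof (cases "s \<in> {0<..<1}")
      case True
      have i: "a + (b - a) * s \<in> {a<..<b}" using True ab
      proof -
        have "(b - a) * s < (b - a) * 1" using True ab by (intro mult_strict_left_mono) auto
        moreover have "0 < (b - a) * s" using True ab by simp
        moreover have "(a - b) * s = - ((b - a) * s)" by algebra
        ultimately show ?thesis by simp
      qed
      have "(a + (b - a) * s - a) powr (\<alpha> - 1) = (b - a) powr (\<alpha> - 1) * s powr (\<alpha> - 1)"
      proof -
        have "a + (b - a) * s - a = (b - a) * s" by algebra
        thus ?thesis using True ab by (simp add: powr_mult)
      qed
      moreover have "True" by simp
      ultimately show ?thesis using True i ab by (simp add: ennreal_mult' mult.assoc)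
    next
      case False
      have i: "a + (b - a) * s \<notin> {a<..<b}"
      proof (rule notI)
        assume m: "a + (b - a) * s \<in> {a<..<b}"
        show False
        proof (cases "s \<le> 0")
          case True
          hence "(b - a) * s \<le> 0" using ab by (simp add: mult_nonneg_nonpos)
          moreover have "(a - b) * s = - ((b - a) * s)" by algebra
          ultimately show False using m by simp
        next
          case c: False
          hence "s \<ge> 1" using False by auto
          hence "(b - a) * 1 \<le> (b - a) * s" using ab by (intro mult_left_mono) auto
          moreover have "(a - b) * s = - ((b - a) * s)" by algebra
          ultimately show False using m by simp
        qed
      qed
      then show ?thesis using False by simp
    qed
    then show ?thesis using ab by simp
  qed
  also have "\<dots> = ennreal (b - a) * (ennreal ((b - a) powr (\<alpha> - 1)) * (\<integral>\<^sup>+s. ennreal (s powr (\<alpha> - 1) * F (a + (b - a) * s)) * indicator {0<..<1} s \<partial>lborel))"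
    by (subst nn_integral_cmult) auto
  also have "\<dots> = ennreal ((b - a) * (b - a) powr (\<alpha> - 1)) * (\<integral>\<^sup>+s. ennreal (s powr (\<alpha> - 1) * F (a + (b - a) * s)) * indicator {0<..<1} s \<partial>lborel)"
    using ab by (simp add: ennreal_mult mult.assoc)
  also have "(b - a) * (b - a) powr (\<alpha> - 1) = (b - a) powr \<alpha>"
    using ab by (simp add: powr_mult_base)
  finally show ?thesis .
qed


theorem theorem9:
  fixes h f :: "real \<Rightarrow> real" and I J :: "real set" and a b \<alpha> :: real
  assumes "is_interval I" and "is_interval J" and "{0<..<1} \<subseteq> J"
    and "\<forall>t\<in>J. 0 < h t"
    and "hconvex h I f"
    and "a \<in> I" and "b \<in> I" and "a < b"
    and "set_integrable lborel {a..b} f"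
    and "0 < \<alpha>"
  shows "ennreal (f ((a + b) / 2) / (\<alpha> * h (1/2)))
           \<le> ennreal (Gamma \<alpha> / (b - a) powr \<alpha>) * (RL_left \<alpha> a f b + RL_right \<alpha> b f a)
         \<and> ennreal (Gamma \<alpha> / (b - a) powr \<alpha>) * (RL_left \<alpha> a f b + RL_right \<alpha> b f a)
           \<le> ennreal (f a + f b) *
             (\<integral>\<^sup>+ t\<in>{0<..<1}. ennreal (t powr (\<alpha> - 1) * (h t + h (1 - t))) \<partial>lborel)"
proof -
  note ab = \<open>a < b\<close> and al = \<open>0 < \<alpha>\<close>
  have fnn: "\<And>x. x \<in> I \<Longrightarrow> 0 \<le> f x" using assms(5) unfolding hconvex_def by blast
  have hc: "\<And>x y l. x \<in> I \<Longrightarrow> y \<in> I \<Longrightarrow> 0 < l \<Longrightarrow> l < 1 \<Longrightarrow>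
      f (l * x + (1 - l) * y) \<le> h l * f x + h (1 - l) * f y"
    using assms(5) unfolding hconvex_def by auto
  have hpos: "\<And>l. 0 < l \<Longrightarrow> l < 1 \<Longrightarrow> 0 < h l" using assms(3,4) by auto
  have inI: "\<And>x. a \<le> x \<Longrightarrow> x \<le> b \<Longrightarrow> x \<in> I"
    using assms(1,6,7) unfolding is_interval_1 by blast
  define F where "F = (\<lambda>x. indicator {a..b} x * f x)"
  have "integrable lborel F" using assms(9) unfolding F_def set_integrable_def by simp
  hence "F \<in> borel_measurable lborel" by (rule borel_measurable_integrable)
  hence Fm[measurable]: "F \<in> borel_measurable borel" by simp
  have FI: "\<And>x. a \<le> x \<Longrightarrow> x \<le> b \<Longrightarrow> F x = f x" unfolding F_def by simp
  define P where "P = (\<lambda>s. ennreal (s powr (\<alpha> - 1) * F (b - (b - a) * s)) * indicator {0<..<1} s)"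
  define Q where "Q = (\<lambda>s. ennreal (s powr (\<alpha> - 1) * F (a + (b - a) * s)) * indicator {0<..<1} s)"
  have Pm[measurable]: "P \<in> borel_measurable lborel" unfolding P_def by measurable
  have Qm[measurable]: "Q \<in> borel_measurable lborel" unfolding Q_def by measurable
  have pts: "a \<le> b - (b - a) * s \<and> b - (b - a) * s \<le> b \<and> a \<le> a + (b - a) * s \<and> a + (b - a) * s \<le> b"
    if "0 < s" "s < 1" for s
  proof -
    have "(b - a) * s \<le> (b - a) * 1" using that ab by (intro mult_left_mono) auto
    moreover have "0 \<le> (b - a) * s" using that ab by simp
    ultimately show ?thesis by simp
  qed
  have L: "RL_left \<alpha> a f b = ennreal (1 / Gamma \<alpha>) * (ennreal ((b - a) powr \<alpha>) * integral\<^sup>N lborel P)"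
  proof -
    have "(\<integral>\<^sup>+t. ennreal ((b - t) powr (\<alpha> - 1) * f t) * indicator {a<..<b} t \<partial>lborel)
        = (\<integral>\<^sup>+t. ennreal ((b - t) powr (\<alpha> - 1) * F t) * indicator {a<..<b} t \<partial>lborel)"
      by (rule nn_integral_cong) (auto simp: FI split: split_indicator)
    also have "\<dots> = ennreal ((b - a) powr \<alpha>) * integral\<^sup>N lborel P"
      unfolding P_def by (rule affL[OF Fm ab al])
    finally show ?thesis unfolding RL_left_def by simp
  qed
  have R: "RL_right \<alpha> b f a = ennreal (1 / Gamma \<alpha>) * (ennreal ((b - a) powr \<alpha>) * integral\<^sup>N lborel Q)"
  proof -
    have "(\<integral>\<^sup>+t. ennreal ((t - a) powr (\<alpha> - 1) * f t) * indicator {a<..<b} t \<partial>lborel)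
        = (\<integral>\<^sup>+t. ennreal ((t - a) powr (\<alpha> - 1) * F t) * indicator {a<..<b} t \<partial>lborel)"
      by (rule nn_integral_cong) (auto simp: FI split: split_indicator)
    also have "\<dots> = ennreal ((b - a) powr \<alpha>) * integral\<^sup>N lborel Q"
      unfolding Q_def by (rule affR[OF Fm ab al])
    finally show ?thesis unfolding RL_right_def by simp
  qed
  have G: "Gamma \<alpha> > 0" using al by (rule Gamma_real_pos)
  have K: "ennreal (Gamma \<alpha> / (b - a) powr \<alpha>) * (RL_left \<alpha> a f b + RL_right \<alpha> b f a)
       = (\<integral>\<^sup>+s. P s + Q s \<partial>lborel)"
  proof -
    have c: "ennreal (Gamma \<alpha> / (b - a) powr \<alpha>) * ennreal (1 / Gamma \<alpha>) * ennreal ((b - a) powr \<alpha>) = 1"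
      using G ab by (simp flip: ennreal_mult)
    have "ennreal (Gamma \<alpha> / (b - a) powr \<alpha>) * (RL_left \<alpha> a f b + RL_right \<alpha> b f a)
       = (ennreal (Gamma \<alpha> / (b - a) powr \<alpha>) * ennreal (1 / Gamma \<alpha>) * ennreal ((b - a) powr \<alpha>))
          * (integral\<^sup>N lborel P + integral\<^sup>N lborel Q)"
      unfolding L R by (simp add: algebra_simps)
    also have "\<dots> = integral\<^sup>N lborel P + integral\<^sup>N lborel Q" using c by simp
    also have "\<dots> = (\<integral>\<^sup>+s. P s + Q s \<partial>lborel)" by (rule nn_integral_add[symmetric]) auto
    finally show ?thesis .
  qed
  define m where "m = (a + b) / 2"
  have h12: "0 < h (1/2)" using hpos by simp
  have part1: "ennreal (f m / (\<alpha> * h (1/2))) \<le> (\<integral>\<^sup>+s. P s + Q s \<partial>lborel)"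
  proof -
    have fm: "0 \<le> f m" using fnn inI ab unfolding m_def by simp
    have "ennreal (f m / (\<alpha> * h (1/2))) = ennreal (f m / h (1/2)) * ennreal (1 / \<alpha>)"
      using fm h12 al by (simp flip: ennreal_mult)
    also have "\<dots> = ennreal (f m / h (1/2)) * (\<integral>\<^sup>+s. ennreal (s powr (\<alpha> - 1)) * indicator {0<..<1} s \<partial>lborel)"
      using powr_int01[OF al] by simp
    also have "\<dots> = (\<integral>\<^sup>+s. ennreal (f m / h (1/2)) * (ennreal (s powr (\<alpha> - 1)) * indicator {0<..<1} s) \<partial>lborel)"
      by (rule nn_integral_cmult[symmetric]) measurable
    also have "\<dots> \<le> (\<integral>\<^sup>+s. P s + Q s \<partial>lborel)"
    proof (rule nn_integral_mono)
      fix s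
      show "ennreal (f m / h (1/2)) * (ennreal (s powr (\<alpha> - 1)) * indicator {0<..<1} s) \<le> P s + Q s"
      proof (cases "s \<in> {0<..<1}")
        case False then show ?thesis by (simp add: P_def Q_def)
      next
        case True
        define x where "x = b - (b - a) * s"
        define y where "y = a + (b - a) * s"
        have xy: "a \<le> x" "x \<le> b" "a \<le> y" "y \<le> b" using pts[of s] True unfolding x_def y_def by auto
        have "f ((1/2) * x + (1 - 1/2) * y) \<le> h (1/2) * f x + h (1 - 1/2) * f y"
          using hc[of x y "1/2"] inI xy by simp
        moreover have "(1/2) * x + (1 - 1/2) * y = m" unfolding x_def y_def m_def by (simp add: field_simps)
        ultimately have ineq: "f m \<le> h (1/2) * (f x + f y)" by (simp add: algebra_simps)
        have sp: "0 \<le> s powr (\<alpha> - 1)" by simp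
        have "f m / h (1/2) * s powr (\<alpha> - 1) \<le> (f x + f y) * s powr (\<alpha> - 1)"
          using ineq h12 sp by (intro mult_right_mono) (auto simp: divide_le_eq mult.commute)
        moreover have "0 \<le> f x" "0 \<le> f y" using fnn inI xy by auto
        ultimately have "ennreal (f m / h (1/2) * s powr (\<alpha> - 1))
             \<le> ennreal (s powr (\<alpha> - 1) * f x) + ennreal (s powr (\<alpha> - 1) * f y)"
        proof -
          assume a1: "f m / h (1/2) * s powr (\<alpha> - 1) \<le> (f x + f y) * s powr (\<alpha> - 1)"
            and a2: "0 \<le> f x" and a3: "0 \<le> f y"
          have e: "ennreal (s powr (\<alpha> - 1) * f x) + ennreal (s powr (\<alpha> - 1) * f y)
             = ennreal (s powr (\<alpha> - 1) * f x + s powr (\<alpha> - 1) * f y)"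
            using a2 a3 sp by (intro ennreal_plus[symmetric]) auto
          show ?thesis unfolding e using a1 by (intro ennreal_leI) (simp add: algebra_simps)
        qed
        moreover have "0 \<le> f m / h (1/2)" using fm h12 by simp
        ultimately show ?thesis using True xy unfolding P_def Q_def x_def y_def
          by (simp add: FI ennreal_mult[symmetric])
      qed
    qed
    finally show ?thesis .
  qed
  have part2: "(\<integral>\<^sup>+s. P s + Q s \<partial>lborel) \<le> ennreal (f a + f b) *
             (\<integral>\<^sup>+ t\<in>{0<..<1}. ennreal (t powr (\<alpha> - 1) * (h t + h (1 - t))) \<partial>lborel)"
  proof -
    have "(\<integral>\<^sup>+s. P s + Q s \<partial>lborel) \<le>
        (\<integral>\<^sup>+s. ennreal (f a + f b) * (ennreal (s powr (\<alpha> - 1) * (h s + h (1 - s))) * indicator {0<..<1} s) \<partial>lborel)"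
    proof (rule nn_integral_mono)
      fix s
      show "P s + Q s \<le> ennreal (f a + f b) * (ennreal (s powr (\<alpha> - 1) * (h s + h (1 - s))) * indicator {0<..<1} s)"
      proof (cases "s \<in> {0<..<1}")
        case False then show ?thesis by (simp add: P_def Q_def)
      next
        case True
        define x where "x = b - (b - a) * s"
        define y where "y = a + (b - a) * s"
        have xy: "a \<le> x" "x \<le> b" "a \<le> y" "y \<le> b" using pts[of s] True unfolding x_def y_def by auto
        have "f (s * a + (1 - s) * b) \<le> h s * f a + h (1 - s) * f b"
          using hc[of a b s] assms(6,7) True by simp
        moreover have "s * a + (1 - s) * b = x" unfolding x_def by algebra
        ultimately have i1: "f x \<le> h s * f a + h (1 - s) * f b" by simp
        have "f (s * b + (1 - s) * a) \<le> h s * f b + h (1 - s) * f a"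
          using hc[of b a s] assms(6,7) True by simp
        moreover have "s * b + (1 - s) * a = y" unfolding y_def by algebra
        ultimately have i2: "f y \<le> h s * f b + h (1 - s) * f a" by simp
        have sp: "0 \<le> s powr (\<alpha> - 1)" by simp
        have "(f x + f y) * s powr (\<alpha> - 1) \<le> ((f a + f b) * (h s + h (1 - s))) * s powr (\<alpha> - 1)"
          using i1 i2 sp by (intro mult_right_mono) (auto simp: algebra_simps)
        moreover have "0 \<le> f x" "0 \<le> f y" using fnn inI xy by auto
        moreover have "0 \<le> f a" "0 \<le> f b" using fnn assms(6,7) by auto
        moreover have "0 < h s" "0 < h (1 - s)" using hpos True by auto
        ultimately have "ennreal (s powr (\<alpha> - 1) * f x) + ennreal (s powr (\<alpha> - 1) * f y)
             \<le> ennreal (f a + f b) * ennreal (s powr (\<alpha> - 1) * (h s + h (1 - s)))"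
        proof -
          assume a1: "(f x + f y) * s powr (\<alpha> - 1) \<le> ((f a + f b) * (h s + h (1 - s))) * s powr (\<alpha> - 1)"
            and a2: "0 \<le> f x" and a3: "0 \<le> f y" and a4: "0 \<le> f a" "0 \<le> f b"
            and a5: "0 < h s" "0 < h (1 - s)"
          have e: "ennreal (s powr (\<alpha> - 1) * f x) + ennreal (s powr (\<alpha> - 1) * f y)
             = ennreal (s powr (\<alpha> - 1) * f x + s powr (\<alpha> - 1) * f y)"
            using a2 a3 sp by (intro ennreal_plus[symmetric]) auto
          have e2: "ennreal (f a + f b) * ennreal (s powr (\<alpha> - 1) * (h s + h (1 - s)))
             = ennreal ((f a + f b) * (s powr (\<alpha> - 1) * (h s + h (1 - s))))"
            using a4 a5 sp by (intro ennreal_mult[symmetric]) auto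
          show ?thesis unfolding e e2 using a1 by (intro ennreal_leI) (simp add: algebra_simps)
        qed
        then show ?thesis using True xy unfolding P_def Q_def x_def y_def
          by (simp add: FI)
      qed
    qed
    also have "\<dots> \<le> ennreal (f a + f b) *
             (\<integral>\<^sup>+ t\<in>{0<..<1}. ennreal (t powr (\<alpha> - 1) * (h t + h (1 - t))) \<partial>lborel)"
      using fnn assms(6,7) by (intro nn_cmult_le) auto
    finally show ?thesis .
  qed
  show ?thesis using part1 part2 K unfolding m_def by simp
qed

end
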